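(* Fix a real number $x>1$. There is a function $g:[0,1)\to\mathbb{R}$ with $g(\epsilon)/\epsilon\to 0$ as $\epsilon\to 0^+$ such that the following holds. Let $0\le\epsilon<1$ and $y=1+\epsilon$, let $N\ge1$ and $n\ge1$ be integers, and let $\mathcal{S}_0,\dots,\mathcal{S}_{n-1}$ be nonempty sets of QPSK sequences of length $N$ such that, for every $0\le i\le n-1$: (a) $\mathrm{PEP}(\mathbf{s})\le x\,y^{2i}N$ for every $\mathbf{s}\in\mathcal{S}_i$; and (b) if $\mathbf{s}\in\mathcal{S}_i$ then $j^m\mathbf{s}\in\mathcal{S}_i$ for every $m\in\mathbb{Z}_4$. Let $\mathcal{A}$ be the set of all $2^{2n}$-QAM sequences associated with tuples $(\mathbf{s}_0,\dots,\mathbf{s}_{n-1})$ with $\mathbf{s}_i\in\mathcal{S}_i$. Then $$\mathrm{PMEPR}(\mathcal{A})<3x(1+2\epsilon)+g(\epsilon)\quad\text{and}\quad \mathrm{PMEPR}(\mathcal{A})<3xy^2+g(\epsilon).$$ (In the paper's notation: $\mathrm{PMEPR}(\mathcal{A})<3x(1+2\epsilon)+o(\epsilon)$ and $\mathrm{PMEPR}(\mathcal{A})<3xy^2+o(\epsilon)$.)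
   Context: Let $j=\sqrt{-1}$. Fix $T>0$ and reals $f_0,\Delta f$ with $T\Delta f$ a positive integer; set $f_k=f_0+k\Delta f$. For a complex sequence $\mathbf{a}=(a_0,\dots,a_{N-1})$ define $S_{\mathbf{a}}(t)=\sum_{k=0}^{N-1}a_ke^{2\pi j f_k t}$, $P_{\mathbf{a}}(t)=|S_{\mathbf{a}}(t)|^2$, and $\mathrm{PEP}(\mathbf{a})=\sup_{t\in[0,T]}P_{\mathbf{a}}(t)$. A QPSK sequence of length $N$ is a sequence $\mathbf{s}=(s_0,\dots,s_{N-1})$ with every $s_k\in\{1,j,-1,-j\}$; $j^m\mathbf{s}=(j^ms_0,\dots,j^ms_{N-1})$. The $2^{2n}$-QAM sequence associated with QPSK sequences $\mathbf{s}_0,\dots,\mathbf{s}_{n-1}$, $\mathbf{s}_i=(s_{i,0},\dots,s_{i,N-1})$, is $\mathbf{a}=(a_0,\dots,a_{N-1})$ with $a_k=\frac{\sqrt2}{2}e^{\pi j/4}\sum_{i=0}^{n-1}2^{n-1-i}s_{i,k}$. The mean envelope power of $\mathcal{A}$ is $P_{av}(\mathcal{A})=\mathbb{E}\big[\frac1T\int_0^TP_{\mathbf{a}}(t)\,dt\big]=\mathbb{E}\|\mathbf{a}\|^2$, where the expectation is over $\mathbf{a}$ associated with $(\mathbf{s}_0,\dots,\mathbf{s}_{n-1})$ chosen uniformly at random from $\mathcal{S}_0\times\cdots\times\mathcal{S}_{n-1}$ (each $\mathbf{s}_i$ uniform in $\mathcal{S}_i$, independently). The peak-to-mean envelope power ratio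 is $\mathrm{PMEPR}(\mathcal{A})=\max_{\mathbf{a}\in\mathcal{A}}\mathrm{PEP}(\mathbf{a})/P_{av}(\mathcal{A})$. *)

theory Defs
  imports "HOL-Analysis.Analysis"
begin

definition S_sig :: "real \<Rightarrow> real \<Rightarrow> complex list \<Rightarrow> real \<Rightarrow> complex" where
  "S_sig f0 df a t = (\<Sum>k<length a. a ! k * exp (2 * pi * \<i> * complex_of_real ((f0 + real k * df) * t)))"

definition P_env :: "real \<Rightarrow> real \<Rightarrow> complex list \<Rightarrow> real \<Rightarrow> real" where
  "P_env f0 df a t = (cmod (S_sig f0 df a t))\<^sup>2"

definition PEP :: "real \<Rightarrow> real \<Rightarrow> real \<Rightarrow> complex list \<Rightarrow> real" where
  "PEP T f0 df a = (SUP t\<in>{0..T}. P_env f0 df a t)"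

definition qpsk_seq :: "nat \<Rightarrow> complex list \<Rightarrow> bool" where
  "qpsk_seq N s \<longleftrightarrow> length s = N \<and> set s \<subseteq> {1, \<i>, -1, -\<i>}"

definition rot :: "nat \<Rightarrow> complex list \<Rightarrow> complex list" where
  "rot m s = map (\<lambda>z. \<i> ^ m * z) s"

definition qam_seq :: "nat \<Rightarrow> nat \<Rightarrow> (nat \<Rightarrow> complex list) \<Rightarrow> complex list" where
  "qam_seq N n ss = map (\<lambda>k. complex_of_real (sqrt 2 / 2) * exp (pi * \<i> / 4) *
      (\<Sum>i<n. of_nat (2 ^ (n - 1 - i)) * (ss i ! k))) [0..<N]"

definition qam_set :: "nat \<Rightarrow> nat \<Rightarrow> (nat \<Rightarrow> complex list set) \<Rightarrow> complex list set" where
  "qam_set N n SS = qam_seq N n ` (Pi\<^sub>E {..<n} SS)"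

definition sqnorm :: "complex list \<Rightarrow> real" where
  "sqnorm a = (\<Sum>k<length a. (cmod (a ! k))\<^sup>2)"

text \<open>Mean envelope power: expectation of the energy over the tuple (ss 0, ..., ss (n-1))
  drawn uniformly from SS 0 x ... x SS (n-1).\<close>
definition P_av :: "nat \<Rightarrow> nat \<Rightarrow> (nat \<Rightarrow> complex list set) \<Rightarrow> real" where
  "P_av N n SS = (\<Sum>ss\<in>Pi\<^sub>E {..<n} SS. sqnorm (qam_seq N n ss)) / real (\<Prod>i<n. card (SS i))"

definition PMEPR :: "real \<Rightarrow> real \<Rightarrow> real \<Rightarrow> nat \<Rightarrow> nat \<Rightarrow> (nat \<Rightarrow> complex list set) \<Rightarrow> real" where
  "PMEPR T f0 df N n SS = Max (PEP T f0 df ` qam_set N n SS) / P_av N n SS"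

end

theory Submission imports Defs begin

definition H :: "real \<Rightarrow> real \<Rightarrow> nat \<Rightarrow> real" where
  "H q r n = (\<Sum>i<n. q ^ (n - 1 - i) * r ^ i)"

lemma H_Suc: "H q r (Suc n) = q * H q r n + r ^ n"
proof -
  have "H q r (Suc n) = (\<Sum>i<n. q ^ (n - i) * r ^ i) + r ^ n"
    by (simp add: H_def)
  also have "(\<Sum>i<n. q ^ (n - i) * r ^ i) = (\<Sum>i<n. q * (q ^ (n - 1 - i) * r ^ i))"
  proof (rule sum.cong)
    fix i assume "i \<in> {..<n}"
    then have "n - i = Suc (n - 1 - i)" by auto
    then show "q ^ (n - i) * r ^ i = q * (q ^ (n - 1 - i) * r ^ i)" by simp
  qed simp
  finally show ?thesis by (simp add: H_def sum_distrib_left)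
qed

lemma H_closed: "(q - r) * H q r n = q ^ n - r ^ n"
proof (induction n)
  case 0 then show ?case by (simp add: H_def)
next
  case (Suc n)
  have "(q - r) * H q r (Suc n) = q * ((q - r) * H q r n) + (q - r) * r ^ n"
    by (simp add: H_Suc algebra_simps)
  also have "\<dots> = q ^ Suc n - r ^ Suc n" unfolding Suc.IH by (simp add: algebra_simps)
  finally show ?case .
qed

lemma norm_exp_2pi: "cmod (exp (2 * pi * \<i> * complex_of_real r)) = 1"
  by simp

lemma S_sig_bound: "cmod (S_sig f0 df a t) \<le> (\<Sum>k<length a. cmod (a ! k))"
  unfolding S_sig_def
  by (rule order_trans[OF norm_sum]) (simp add: norm_mult)

lemma P_env_le_PEP:
  assumes "t \<in> {0..T}"
  shows "P_env f0 df a t \<le> PEP T f0 df a"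
  unfolding PEP_def
proof (rule cSUP_upper[OF assms])
  show "bdd_above (P_env f0 df a ` {0..T})"
    by (rule bdd_aboveI[where M="(\<Sum>k<length a. cmod (a ! k))\<^sup>2"])
       (auto simp: P_env_def intro!: power_mono S_sig_bound)
qed


lemma rot1_nth: "k < length s \<Longrightarrow> rot 1 s ! k = \<i> * s ! k"
  by (simp add: rot_def)

lemma inj_rot1: "inj (rot 1)"
  unfolding rot_def by (rule inj_mapI) (simp add: inj_on_def)

lemma cross_zero:
  fixes SS :: "nat \<Rightarrow> complex list set" and n N k i i' :: nat
  assumes fin: "\<forall>i<n. finite (SS i)"
    and rt: "\<forall>i<n. \<forall>s\<in>SS i. rot 1 s \<in> SS i"
    and len: "\<forall>i<n. \<forall>s\<in>SS i. length s = N"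
    and k: "k < N" and i: "i < n" and i': "i' < n" and ne: "i \<noteq> i'"
  shows "(\<Sum>ss\<in>Pi\<^sub>E {..<n} SS. ss i ! k * cnj (ss i' ! k)) = 0"
proof -
  define P where "P = Pi\<^sub>E {..<n} SS"
  define \<phi> where "\<phi> ss = ss(i := rot 1 (ss i))" for ss :: "nat \<Rightarrow> complex list"
  have finP: "finite P" unfolding P_def using fin by (intro finite_PiE) auto
  have sub: "\<phi> ` P \<subseteq> P"
    using rt i unfolding P_def \<phi>_def by (auto simp: PiE_def Pi_def extensional_def)
  have inj: "inj_on \<phi> P"
  proof (rule inj_onI)
    fix a b assume "a \<in> P" "b \<in> P" "\<phi> a = \<phi> b"
    then have "rot 1 (a i) = rot 1 (b i)" "\<forall>j. j \<noteq> i \<longrightarrow> a j = b j"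
      unfolding \<phi>_def by (metis fun_upd_same, metis fun_upd_other)
    then have "a i = b i" using inj_rot1 by (auto dest: injD)
    with \<open>\<forall>j. j \<noteq> i \<longrightarrow> a j = b j\<close> show "a = b" by auto
  qed
  have eq: "\<phi> ` P = P" by (rule endo_inj_surj[OF finP sub inj])
  define g where "g ss = ss i ! k * cnj (ss i' ! k)" for ss :: "nat \<Rightarrow> complex list"
  have "sum g P = sum g (\<phi> ` P)" using eq by simp
  also have "\<dots> = sum (g \<circ> \<phi>) P" by (rule sum.reindex[OF inj])
  also have "\<dots> = sum (\<lambda>ss. \<i> * g ss) P"
  proof (rule sum.cong)
    fix ss assume "ss \<in> P"
    then have "length (ss i) = N" using len i unfolding P_def by auto
    then show "(g \<circ> \<phi>) ss = \<i> * g ss"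
      using ne k unfolding g_def \<phi>_def by (simp add: rot_def)
  qed simp
  also have "\<dots> = \<i> * sum g P" by (simp add: sum_distrib_left)
  finally have "sum g P = \<i> * sum g P" .
  then have "(1 - \<i>) * sum g P = 0" by (simp add: algebra_simps)
  then show ?thesis unfolding g_def P_def by simp
qed

lemma qpsk_nth_norm:
  assumes "qpsk_seq N s" "k < N" shows "s ! k * cnj (s ! k) = 1"
proof -
  have "s ! k \<in> {1, \<i>, -1, -\<i>}" using assms unfolding qpsk_seq_def by (auto simp: subset_iff)
  then show ?thesis by (auto simp: complex_eq_iff)
qed


lemma sum_sq:
  fixes SS :: "nat \<Rightarrow> complex list set" and n N k :: nat and w :: "nat \<Rightarrow> real"
  assumes fin: "\<forall>i<n. finite (SS i)"
    and rt: "\<forall>i<n. \<forall>s\<in>SS i. rot 1 s \<in> SS i"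
    and qp: "\<forall>i<n. \<forall>s\<in>SS i. qpsk_seq N s"
    and k: "k < N"
  shows "(\<Sum>ss\<in>Pi\<^sub>E {..<n} SS. (cmod (\<Sum>i<n. complex_of_real (w i) * ss i ! k))\<^sup>2)
     = real (card (Pi\<^sub>E {..<n} SS)) * (\<Sum>i<n. (w i)\<^sup>2)"
proof -
  define P where "P = Pi\<^sub>E {..<n} SS"
  have len: "\<forall>i<n. \<forall>s\<in>SS i. length s = N" using qp by (auto simp: qpsk_seq_def)
  have inner: "(\<Sum>ss\<in>P. ss i ! k * cnj (ss i' ! k)) = (if i = i' then of_nat (card P) else 0)"
    if "i < n" "i' < n" for i i'
  proof (cases "i = i'")
    case True
    have "(\<Sum>ss\<in>P. ss i ! k * cnj (ss i ! k)) = (\<Sum>ss\<in>P. 1)"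
      using qp that k unfolding P_def by (intro sum.cong) (auto intro: qpsk_nth_norm)
    then show ?thesis using True by simp
  next
    case False
    then show ?thesis using cross_zero[OF fin rt len k that False] unfolding P_def by simp
  qed
  have "complex_of_real (\<Sum>ss\<in>P. (cmod (\<Sum>i<n. complex_of_real (w i) * ss i ! k))\<^sup>2)
      = (\<Sum>ss\<in>P. (\<Sum>i<n. complex_of_real (w i) * ss i ! k) * cnj (\<Sum>i<n. complex_of_real (w i) * ss i ! k))"
    unfolding of_real_sum by (intro sum.cong refl) (rule complex_norm_square)
  also have "\<dots> = (\<Sum>ss\<in>P. \<Sum>i<n. \<Sum>i'<n. complex_of_real (w i * w i') * (ss i ! k * cnj (ss i' ! k)))"
    by (simp add: sum_product cnj_sum algebra_simps)
  also have "\<dots> = (\<Sum>i<n. \<Sum>i'<n. complex_of_real (w i * w i') * (\<Sum>ss\<in>P. ss i ! k * cnj (ss i' ! k)))"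
    by (simp add: sum.swap[of _ P] sum_distrib_left)
  also have "\<dots> = (\<Sum>i<n. \<Sum>i'<n. complex_of_real (w i * w i') * (if i = i' then of_nat (card P) else 0))"
    by (intro sum.cong refl) (simp add: inner)
  also have "\<dots> = (\<Sum>i<n. complex_of_real ((w i)\<^sup>2 * real (card P)))"
  proof (rule sum.cong[OF refl])
    fix i assume "i \<in> {..<n}"
    have "(\<Sum>i'<n. complex_of_real (w i * w i') * (if i = i' then of_nat (card P) else 0))
        = (\<Sum>i'<n. if i = i' then complex_of_real (w i * w i') * of_nat (card P) else 0)"
      by (intro sum.cong refl) simp
    also have "\<dots> = complex_of_real ((w i)\<^sup>2 * real (card P))"
      using \<open>i \<in> {..<n}\<close> by (simp add: sum.delta power2_eq_square)
    finally show "(\<Sum>i'<n. complex_of_real (w i * w i') * (if i = i' then of_nat (card P) else 0))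
        = complex_of_real ((w i)\<^sup>2 * real (card P))" .
  qed
  also have "\<dots> = complex_of_real (real (card P) * (\<Sum>i<n. (w i)\<^sup>2))"
    by (simp add: sum_distrib_left mult.commute)
  finally show ?thesis unfolding P_def of_real_eq_iff .
qed


lemma cmod_c: "cmod (complex_of_real (sqrt 2 / 2) * exp (pi * \<i> / 4)) = sqrt 2 / 2"
  by (simp add: norm_mult)

lemma qam_nth: "k < N \<Longrightarrow> qam_seq N n ss ! k = complex_of_real (sqrt 2 / 2) * exp (pi * \<i> / 4) *
      (\<Sum>i<n. of_nat (2 ^ (n - 1 - i)) * (ss i ! k))"
  by (simp add: qam_seq_def)

lemma qam_len: "length (qam_seq N n ss) = N"
  by (simp add: qam_seq_def)

lemma P_av_eq:
  fixes SS :: "nat \<Rightarrow> complex list set" and n N :: nat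
  assumes fin: "\<forall>i<n. finite (SS i)"
    and rt: "\<forall>i<n. \<forall>s\<in>SS i. rot 1 s \<in> SS i"
    and qp: "\<forall>i<n. \<forall>s\<in>SS i. qpsk_seq N s"
    and ne: "\<forall>i<n. SS i \<noteq> {}"
  shows "P_av N n SS = real N * (\<Sum>i<n. (2 ^ (n - 1 - i))\<^sup>2) / 2"
proof -
  define P where "P = Pi\<^sub>E {..<n} SS"
  define w :: "nat \<Rightarrow> real" where "w i = 2 ^ (n - 1 - i)" for i
  have cardP: "card P = (\<Prod>i<n. card (SS i))" unfolding P_def by (simp add: card_PiE)
  have finP: "finite P" unfolding P_def using fin by (intro finite_PiE) auto
  have neP: "P \<noteq> {}" unfolding P_def using ne by (simp add: PiE_eq_empty_iff)
  have cpos: "card P > 0" using finP neP by (simp add: card_gt_0_iff)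
  have sq: "sqnorm (qam_seq N n ss) = (\<Sum>k<N. (cmod (\<Sum>i<n. complex_of_real (w i) * ss i ! k))\<^sup>2 / 2)" for ss
  proof -
    have "sqnorm (qam_seq N n ss) = (\<Sum>k<N. (cmod (qam_seq N n ss ! k))\<^sup>2)"
      by (simp add: sqnorm_def qam_len)
    also have "\<dots> = (\<Sum>k<N. (cmod (\<Sum>i<n. complex_of_real (w i) * ss i ! k))\<^sup>2 / 2)"
    proof (rule sum.cong[OF refl])
      fix k assume "k \<in> {..<N}"
      then have "qam_seq N n ss ! k = complex_of_real (sqrt 2 / 2) * exp (pi * \<i> / 4) *
          (\<Sum>i<n. complex_of_real (w i) * ss i ! k)"
        by (simp add: qam_nth w_def)
      then have "cmod (qam_seq N n ss ! k) = sqrt 2 / 2 * cmod (\<Sum>i<n. complex_of_real (w i) * ss i ! k)"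
        by (simp only: norm_mult[of "complex_of_real (sqrt 2 / 2) * exp (pi * \<i> / 4)"] cmod_c)
      then show "(cmod (qam_seq N n ss ! k))\<^sup>2 = (cmod (\<Sum>i<n. complex_of_real (w i) * ss i ! k))\<^sup>2 / 2"
        by (simp only: power_mult_distrib power_divide) simp
    qed
    finally show ?thesis .
  qed
  have "(\<Sum>ss\<in>P. sqnorm (qam_seq N n ss)) = (\<Sum>k<N. (\<Sum>ss\<in>P. (cmod (\<Sum>i<n. complex_of_real (w i) * ss i ! k))\<^sup>2) / 2)"
    by (simp add: sq sum.swap[of _ P] sum_divide_distrib)
  also have "\<dots> = (\<Sum>k<N. real (card P) * (\<Sum>i<n. (w i)\<^sup>2) / 2)"
    by (intro sum.cong refl) (simp add: sum_sq[OF fin rt qp] P_def)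
  also have "\<dots> = real N * real (card P) * (\<Sum>i<n. (w i)\<^sup>2) / 2" by simp
  finally show ?thesis
    unfolding P_av_def P_def[symmetric] cardP[symmetric] using cpos by (simp add: w_def)
qed


lemma S_sig_qam:
  assumes len: "\<forall>i<n. length (ss i) = N"
  shows "S_sig f0 df (qam_seq N n ss) t = complex_of_real (sqrt 2 / 2) * exp (pi * \<i> / 4) *
     (\<Sum>i<n. of_nat (2 ^ (n - 1 - i)) * S_sig f0 df (ss i) t)"
proof -
  define e where "e k = exp (2 * pi * \<i> * complex_of_real ((f0 + real k * df) * t))" for k
  define c where "c = complex_of_real (sqrt 2 / 2) * exp (pi * \<i> / 4)"
  have "S_sig f0 df (qam_seq N n ss) t = (\<Sum>k<N. (c * (\<Sum>i<n. of_nat (2 ^ (n - 1 - i)) * (ss i ! k))) * e k)"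
    unfolding S_sig_def qam_len e_def c_def by (intro sum.cong refl) (simp add: qam_nth)
  also have "\<dots> = c * (\<Sum>i<n. of_nat (2 ^ (n - 1 - i)) * (\<Sum>k<N. ss i ! k * e k))"
    by (simp add: sum_distrib_left sum_distrib_right sum.swap[of _ "{..<N}"] mult.assoc)
  also have "\<dots> = c * (\<Sum>i<n. of_nat (2 ^ (n - 1 - i)) * S_sig f0 df (ss i) t)"
    using len unfolding S_sig_def e_def by simp
  finally show ?thesis unfolding c_def .
qed

lemma PEP_qam:
  fixes x y :: real
  assumes T: "T > 0" and x: "x > 0" and y: "y \<ge> 0" and N: "N \<ge> 1"
    and len: "\<forall>i<n. length (ss i) = N"
    and pep: "\<forall>i<n. PEP T f0 df (ss i) \<le> x * y ^ (2 * i) * real N"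
  shows "PEP T f0 df (qam_seq N n ss) \<le> x * real N * (H 2 y n)\<^sup>2 / 2"
proof -
  define B where "B = sqrt 2 / 2 * (\<Sum>i<n. 2 ^ (n - 1 - i) * (y ^ i * sqrt (x * real N)))"
  have B0: "B \<ge> 0" unfolding B_def using x y by (auto intro!: sum_nonneg mult_nonneg_nonneg)
  have B2: "B\<^sup>2 = x * real N * (H 2 y n)\<^sup>2 / 2"
  proof -
    have "B = sqrt 2 / 2 * sqrt (x * real N) * H 2 y n"
      unfolding B_def H_def by (simp add: sum_distrib_left sum_distrib_right algebra_simps)
    then have "B\<^sup>2 = (sqrt 2 / 2)\<^sup>2 * (sqrt (x * real N))\<^sup>2 * (H 2 y n)\<^sup>2"
      by (simp only: power_mult_distrib)
    also have "\<dots> = (1/2) * (x * real N) * (H 2 y n)\<^sup>2"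
      using x by (simp add: power_divide)
    finally show ?thesis by simp
  qed
  have "P_env f0 df (qam_seq N n ss) t \<le> B\<^sup>2" if t: "t \<in> {0..T}" for t
  proof -
    have each: "cmod (S_sig f0 df (ss i) t) \<le> y ^ i * sqrt (x * real N)" if i: "i < n" for i
    proof -
      have "(cmod (S_sig f0 df (ss i) t))\<^sup>2 \<le> x * y ^ (2 * i) * real N"
        using P_env_le_PEP[OF t, of f0 df "ss i"] pep i unfolding P_env_def by (meson order_trans)
      then have "cmod (S_sig f0 df (ss i) t) \<le> sqrt (x * y ^ (2 * i) * real N)"
        by (simp add: real_le_rsqrt)
      also have "sqrt (x * y ^ (2 * i) * real N) = y ^ i * sqrt (x * real N)"
        using y by (simp add: real_sqrt_mult power_mult power2_eq_square[symmetric] mult.commute mult.left_commute)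
      finally show ?thesis .
    qed
    have "cmod (S_sig f0 df (qam_seq N n ss) t)
        = sqrt 2 / 2 * cmod (\<Sum>i<n. of_nat (2 ^ (n - 1 - i)) * S_sig f0 df (ss i) t)"
      by (simp only: S_sig_qam[OF len] norm_mult[of "complex_of_real (sqrt 2 / 2) * exp (pi * \<i> / 4)"] cmod_c)
    also have "\<dots> \<le> sqrt 2 / 2 * (\<Sum>i<n. 2 ^ (n - 1 - i) * cmod (S_sig f0 df (ss i) t))"
      by (intro mult_left_mono order_trans[OF norm_sum]) (auto simp: norm_mult norm_power)
    also have "\<dots> \<le> B"
      unfolding B_def using each by (intro mult_left_mono sum_mono) auto
    finally have "cmod (S_sig f0 df (qam_seq N n ss) t) \<le> B" .
    then show ?thesis unfolding P_env_def by (intro power_mono) auto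
  qed
  then have "PEP T f0 df (qam_seq N n ss) \<le> B\<^sup>2"
    unfolding PEP_def using T by (intro cSUP_least) auto
  then show ?thesis using B2 by simp
qed


lemma main_bound:
  fixes T f0 df x \<epsilon> :: real and N n :: nat and SS :: "nat \<Rightarrow> complex list set"
  assumes T: "T > 0" and x: "x > 1" and e0: "0 \<le> \<epsilon>" and e1: "\<epsilon> < 1" and N: "N \<ge> 1" and n: "n \<ge> 1"
    and hyp: "\<forall>i<n. SS i \<noteq> {} \<and> (\<forall>s\<in>SS i. qpsk_seq N s)
            \<and> (\<forall>s\<in>SS i. PEP T f0 df s \<le> x * (1 + \<epsilon>) ^ (2 * i) * real N)
            \<and> (\<forall>s\<in>SS i. \<forall>m::nat. m < 4 \<longrightarrow> rot m s \<in> SS i)"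
  shows "PMEPR T f0 df N n SS < 3 * x / (1 - \<epsilon>)\<^sup>2"
proof -
  define y where "y = 1 + \<epsilon>"
  define G where "G = H 2 y n"
  define W where "W = (\<Sum>i<n. (2 ^ (n - 1 - i) :: real)\<^sup>2)"
  have qp: "\<forall>i<n. \<forall>s\<in>SS i. qpsk_seq N s" using hyp by blast
  have ne: "\<forall>i<n. SS i \<noteq> {}" using hyp by blast
  have rt: "\<forall>i<n. \<forall>s\<in>SS i. rot 1 s \<in> SS i" using hyp by force
  have fin: "\<forall>i<n. finite (SS i)"
  proof (intro allI impI)
    fix i assume "i < n"
    then have "SS i \<subseteq> {xs. set xs \<subseteq> {1, \<i>, -1, -\<i>} \<and> length xs = N}"
      using qp by (auto simp: qpsk_seq_def)
    then show "finite (SS i)" by (rule finite_subset) (rule finite_lists_length_eq, simp)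
  qed
  have Pav: "P_av N n SS = real N * W / 2" using P_av_eq[OF fin rt qp ne] unfolding W_def .
  have W_H: "W = H 4 1 n" unfolding W_def H_def
  proof (intro sum.cong refl)
    fix i
    have "((2::real) ^ (n - 1 - i))\<^sup>2 = (2 * 2) ^ (n - 1 - i)" by (simp only: power2_eq_square power_mult_distrib)
    then show "((2::real) ^ (n - 1 - i))\<^sup>2 = 4 ^ (n - 1 - i) * 1 ^ i" by simp
  qed
  have W3: "3 * W = 4 ^ n - 1" using H_closed[of 4 1 n] unfolding W_H by simp
  have n4: "(4::real) ^ n \<ge> 4" using power_increasing[of 1 n "4::real"] n by simp
  have Wpos: "W > 0" using W3 n4 by simp
  have Pavpos: "P_av N n SS > 0" unfolding Pav using Wpos N by simp
  have G0: "G \<ge> 0" unfolding G_def H_def y_def using e0 by (intro sum_nonneg) auto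
  have GH: "(1 - \<epsilon>) * G = 2 ^ n - y ^ n" using H_closed[of 2 y n] unfolding G_def y_def by simp
  have yn: "y ^ n \<ge> 1" unfolding y_def using e0 by simp
  have lo: "0 \<le> (1 - \<epsilon>) * G" using G0 e1 by simp
  have "((1 - \<epsilon>) * G)\<^sup>2 \<le> (2 ^ n - 1)\<^sup>2" using lo GH yn by (intro power_mono) auto
  also have "(2 ^ n - 1 :: real)\<^sup>2 < 4 ^ n - 1"
  proof -
    have "(2::real) ^ n \<ge> 2" using power_increasing[of 1 n "2::real"] n by simp
    moreover have "(4::real) ^ n = (2 ^ n)\<^sup>2" by (simp only: power2_eq_square power_mult_distrib[symmetric]) simp
    ultimately show ?thesis by (simp add: power2_eq_square algebra_simps)
  qed
  finally have key: "((1 - \<epsilon>) * G)\<^sup>2 < 3 * W" using W3 by simp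
  define A where "A = qam_set N n SS"
  have finA: "finite A" unfolding A_def qam_set_def using fin by (intro finite_imageI finite_PiE) auto
  have neA: "A \<noteq> {}" unfolding A_def qam_set_def using ne by (simp add: PiE_eq_empty_iff)
  have bnd: "PEP T f0 df a \<le> x * real N * G\<^sup>2 / 2" if aA: "a \<in> A" for a
  proof -
    obtain ss where ss: "ss \<in> Pi\<^sub>E {..<n} SS" and a: "a = qam_seq N n ss"
      using aA unfolding A_def qam_set_def by auto
    have len: "\<forall>i<n. length (ss i) = N" using ss qp by (auto simp: qpsk_seq_def)
    have pep: "\<forall>i<n. PEP T f0 df (ss i) \<le> x * y ^ (2 * i) * real N" using ss hyp unfolding y_def by auto
    show ?thesis unfolding a G_def using x e0 y_def by (intro PEP_qam[OF T _ _ N len pep]) auto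
  qed
  have Max_le: "Max (PEP T f0 df ` A) \<le> x * real N * G\<^sup>2 / 2"
    using finA neA bnd by (subst Max_le_iff) auto
  have "PMEPR T f0 df N n SS \<le> (x * real N * G\<^sup>2 / 2) / (real N * W / 2)"
    unfolding PMEPR_def A_def[symmetric] Pav[symmetric] using Max_le Pavpos by (intro divide_right_mono) auto
  also have "\<dots> = x * G\<^sup>2 / W" using N by simp
  also have "\<dots> < 3 * x / (1 - \<epsilon>)\<^sup>2"
  proof -
    have "x * G\<^sup>2 * (1 - \<epsilon>)\<^sup>2 = x * ((1 - \<epsilon>) * G)\<^sup>2" by (simp add: power_mult_distrib)
    also have "\<dots> < x * (3 * W)" using key x by simp
    finally have "x * G\<^sup>2 * (1 - \<epsilon>)\<^sup>2 < 3 * x * W" by simp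
    then show ?thesis using Wpos e1 by (simp add: field_simps)
  qed
  finally show ?thesis .
qed


theorem corollary2:
  fixes T f0 df x :: real
  assumes "T > 0"
    and "\<exists>m::nat. m > 0 \<and> T * df = real m"
    and "x > 1"
  shows "\<exists>g :: real \<Rightarrow> real. ((\<lambda>e. g e / e) \<longlongrightarrow> 0) (at_right 0) \<and>
    (\<forall>(\<epsilon>::real) (N::nat) (n::nat) (SS :: nat \<Rightarrow> complex list set).
       0 \<le> \<epsilon> \<longrightarrow> \<epsilon> < 1 \<longrightarrow> N \<ge> 1 \<longrightarrow> n \<ge> 1 \<longrightarrow>
       (\<forall>i<n. SS i \<noteq> {} \<and> (\<forall>s\<in>SS i. qpsk_seq N s)
            \<and> (\<forall>s\<in>SS i. PEP T f0 df s \<le> x * (1 + \<epsilon>) ^ (2 * i) * real N)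
            \<and> (\<forall>s\<in>SS i. \<forall>m::nat. m < 4 \<longrightarrow> rot m s \<in> SS i)) \<longrightarrow>
       PMEPR T f0 df N n SS < 3 * x * (1 + 2 * \<epsilon>) + g \<epsilon> \<and>
       PMEPR T f0 df N n SS < 3 * x * (1 + \<epsilon>)\<^sup>2 + g \<epsilon>)"
proof -
  define g where "g e = 3 * x * e\<^sup>2 * (3 - 2 * e) / (1 - e)\<^sup>2" for e :: real
  have lim: "((\<lambda>e. g e / e) \<longlongrightarrow> 0) (at_right 0)"
  proof -
    have "((\<lambda>e::real. 3 * x * e * (3 - 2 * e) / (1 - e)\<^sup>2) \<longlongrightarrow> 3 * x * 0 * (3 - 2 * 0) / (1 - 0)\<^sup>2) (at_right 0)"
      by (intro tendsto_intros) auto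
    then have "((\<lambda>e::real. 3 * x * e * (3 - 2 * e) / (1 - e)\<^sup>2) \<longlongrightarrow> 0) (at_right 0)" by simp
    moreover have "\<forall>\<^sub>F e in at_right 0. 3 * x * e * (3 - 2 * e) / (1 - e)\<^sup>2 = g e / e"
      unfolding g_def
      by (intro eventually_at_rightI[of 0 1]) (auto simp: power2_eq_square)
    ultimately show ?thesis by (rule Lim_transform_eventually)
  qed
  have "PMEPR T f0 df N n SS < 3 * x * (1 + 2 * \<epsilon>) + g \<epsilon> \<and>
       PMEPR T f0 df N n SS < 3 * x * (1 + \<epsilon>)\<^sup>2 + g \<epsilon>"
    if e0: "0 \<le> \<epsilon>" and e1: "\<epsilon> < 1" and N: "N \<ge> 1" and n: "n \<ge> 1"
      and hyp: "\<forall>i<n. SS i \<noteq> {} \<and> (\<forall>s\<in>SS i. qpsk_seq N s)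
            \<and> (\<forall>s\<in>SS i. PEP T f0 df s \<le> x * (1 + \<epsilon>) ^ (2 * i) * real N)
            \<and> (\<forall>s\<in>SS i. \<forall>m::nat. m < 4 \<longrightarrow> rot m s \<in> SS i)"
    for \<epsilon> N n SS
  proof -
    have b: "PMEPR T f0 df N n SS < 3 * x / (1 - \<epsilon>)\<^sup>2"
      by (rule main_bound[OF assms(1) assms(3) e0 e1 N n hyp])
    have id: "3 * x / (1 - \<epsilon>)\<^sup>2 = 3 * x * (1 + 2 * \<epsilon>) + g \<epsilon>"
    proof -
      have d: "(1 - \<epsilon>)\<^sup>2 \<noteq> 0" using e1 by simp
      have "3 * x = 3 * x * (1 + 2 * \<epsilon>) * (1 - \<epsilon>)\<^sup>2 + 3 * x * \<epsilon>\<^sup>2 * (3 - 2 * \<epsilon>)"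
        by (simp add: power2_eq_square algebra_simps)
      then show ?thesis unfolding g_def using d by (simp add: divide_simps)
    qed
    have "3 * x * (1 + 2 * \<epsilon>) \<le> 3 * x * (1 + \<epsilon>)\<^sup>2"
      using assms(3) by (intro mult_left_mono) (auto simp: power2_eq_square algebra_simps)
    then show ?thesis using b id by linarith
  qed
  with lim show ?thesis by blast
qed

end
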